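(* Let $N\ge3$ and let $a_1,\dots,a_N\in\mathbb{Z}^2$ with $\sum_i a_i=0$. Then $\theta_N(a_1,\dots,a_N)=\frac{N!}{3!}\mu_N(a_1,\dots,a_N)$.
   Context: For $v,w\in\mathbb{Z}^2$, $v\wedge w=\det(v\,|\,w)$ and $[v\wedge w]_+=q^{\frac12 v\wedge w}+q^{-\frac12 v\wedge w}$ for a formal variable $q^{1/2}$. Let $\Omega_N$ be the set of cyclic permutations: orbits of the action of the cyclic group of order $N$ on orderings $(\tilde\omega(1),\dots,\tilde\omega(N))$ of $\{1,\dots,N\}$ by rotating positions. For $\omega\in\Omega_N$ choose a representative $\tilde\omega$ and set $k(\omega)=\sum_{2\le i<j\le N}a_{\tilde\omega(i)}\wedge a_{\tilde\omega(j)}$ (independent of the representative since $\sum a_i=0$). Define $\mu_N(a_1,\dots,a_N)=\sum_{\omega\in\Omega_N}q^{k(\omega)/2}$. The Blechman–Shustin multiplicity is defined recursively by $\theta_3(a_1,a_2,a_3)=[a_1\wedge a_2]_+$ and, for $N\ge4$, $\theta_N(a_1,\dots,a_N)=\sum_{1\le i<j\le N}\theta_{N-1}(a_1,\dots,\hat a_i,\dots,\hat a_j,\dots,a_N,a_i+a_j)\,\theta_3(a_i,a_j,-(a_i+a_j))$, where hats denote omission. *)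

theory Defs
  imports "HOL-Computational_Algebra.Formal_Laurent_Series" "HOL-Library.Product_Plus"
begin

text \<open>Vectors in Z^2 are pairs of integers. Laurent polynomials in the formal
variable t = q^(1/2) are formal Laurent series over the rationals; q^(m/2) = t^m.\<close>

type_synonym vec2 = "int \<times> int"
type_synonym lpoly = "rat fls"

definition wedge :: "vec2 \<Rightarrow> vec2 \<Rightarrow> int" where
  "wedge v w = fst v * snd w - snd v * fst w"

definition qhalf :: "int \<Rightarrow> lpoly" where
  "qhalf m = fls_X_intpow m"

definition bracket_plus :: "vec2 \<Rightarrow> vec2 \<Rightarrow> lpoly" where
  "bracket_plus v w = qhalf (wedge v w) + qhalf (- wedge v w)"

definition theta3 :: "vec2 \<Rightarrow> vec2 \<Rightarrow> vec2 \<Rightarrow> lpoly" where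
  "theta3 a1 a2 a3 = bracket_plus a1 a2"

definition merge_pair :: "vec2 list \<Rightarrow> nat \<Rightarrow> nat \<Rightarrow> vec2 list" where
  "merge_pair xs i j =
     map (\<lambda>k. xs ! k) (filter (\<lambda>k. k \<noteq> i \<and> k \<noteq> j) [0..<length xs]) @ [xs ! i + xs ! j]"

lemma length_merge_pair:
  assumes "i < j" "j < length xs"
  shows "length (merge_pair xs i j) < length xs"
proof -
  have "length (filter (\<lambda>k. k \<noteq> i \<and> k \<noteq> j) [0..<length xs]) < length xs - 1"
  proof -
    have "length (filter (\<lambda>k. k \<noteq> i \<and> k \<noteq> j) [0..<length xs])
          = card ({0..<length xs} - {i, j})"
      by (simp add: length_filter_conv_card, rule arg_cong[where f=card], auto)
    also have "\<dots> = length xs - 2" using assms by (subst card_Diff_subset) auto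
    finally show ?thesis using assms by simp
  qed
  then show ?thesis unfolding merge_pair_def by simp
qed

text \<open>Blechman--Shustin multiplicity theta_N, N = length of the list (positions 0-based).
 For lists of length < 3 it is not defined in the paper; we set it to 0 (never used).\<close>
function theta :: "vec2 list \<Rightarrow> lpoly" where
  "theta xs =
    (if length xs < 3 then 0
     else if length xs = 3 then theta3 (xs ! 0) (xs ! 1) (xs ! 2)
     else (\<Sum>(i, j) \<in> {(i, j). i < j \<and> j < length xs}.
             theta (merge_pair xs i j) * theta3 (xs ! i) (xs ! j) (- (xs ! i + xs ! j))))"
  by pat_completeness auto
termination
  apply (relation "measure length")
   apply simp
  apply (auto simp: length_merge_pair)
  done

declare theta.simps[simp del]

definition orderings :: "nat \<Rightarrow> nat list set" where
  "orderings N = {p. distinct p \<and> set p = {0..<N}}"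

definition rot_orbit :: "nat list \<Rightarrow> nat list set" where
  "rot_orbit p = {rotate r p | r. r < length p}"

definition cyclic_perms :: "nat \<Rightarrow> nat list set set" where
  "cyclic_perms N = rot_orbit ` orderings N"

text \<open>k(omega) for a representative ordering p: sum over positions 2 <= i < j <= N
 (1-based), i.e. 1 <= i < j < N (0-based).\<close>
definition k_ord :: "vec2 list \<Rightarrow> nat list \<Rightarrow> int" where
  "k_ord a p = (\<Sum>(i, j) \<in> {(i, j). 1 \<le> i \<and> i < j \<and> j < length a}.
                   wedge (a ! (p ! i)) (a ! (p ! j)))"

definition mu :: "vec2 list \<Rightarrow> lpoly" where
  "mu a = (\<Sum>\<omega> \<in> cyclic_perms (length a). qhalf (k_ord a (SOME p. p \<in> \<omega>)))"

end

theory Submission imports Defs "HOL-Combinatorics.Multiset_Permutations" begin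

lemma wedge_add1: "wedge (x + y) z = wedge x z + wedge y z"
  by (simp add: wedge_def algebra_simps)
lemma wedge_add2: "wedge z (x + y) = wedge z x + wedge z y"
  by (simp add: wedge_def algebra_simps)
lemma wedge_neg2: "wedge x (- y) = - wedge x y"
  by (simp add: wedge_def algebra_simps)
lemma wedge_self: "wedge x x = 0"
  by (simp add: wedge_def algebra_simps)
lemma wedge_anti: "wedge x y = - wedge y x"
  by (simp add: wedge_def algebra_simps)
lemma wedge_zero2: "wedge x 0 = 0"
  by (simp add: wedge_def)
lemma wedge_zero1: "wedge 0 x = 0"
  by (simp add: wedge_def)

fun K :: "vec2 list \<Rightarrow> int" where
  "K [] = 0"
| "K (v # vs) = wedge v (sum_list vs) + K vs"

lemma wedge_sum_list1: "wedge (sum_list xs) z = (\<Sum>x\<leftarrow>xs. wedge x z)"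
  by (induction xs) (simp_all add: wedge_add1 wedge_zero1)

lemma K_append: "K (xs @ ys) = K xs + K ys + wedge (sum_list xs) (sum_list ys)"
  by (induction xs) (simp_all add: wedge_add1 wedge_add2 wedge_zero1 algebra_simps)

lemma K_split: "K (xs @ u # v # ys) = K (xs @ (u + v) # ys) + wedge u v"
  by (simp add: K_append wedge_add1 wedge_add2 algebra_simps)

lemma qhalf_add: "qhalf (x + y) = qhalf x * qhalf y"
  by (simp add: qhalf_def fls_X_intpow_times_fls_X_intpow)

lemma bracket_mult: "bracket_plus u v * qhalf k = qhalf (k + wedge u v) + qhalf (k + wedge v u)"
proof -
  have "wedge v u = - wedge u v" by (rule wedge_anti)
  then show ?thesis
    by (simp only: bracket_plus_def qhalf_add distrib_right distrib_left mult.commute)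
qed

definition Sg :: "(nat \<Rightarrow> vec2) \<Rightarrow> nat set \<Rightarrow> lpoly" where
  "Sg g A = (\<Sum>p\<in>permutations_of_set A. qhalf (K (map g p)))"

lemma Sg_cong:
  assumes "\<And>x. x \<in> A \<Longrightarrow> g x = g' x"
  shows "Sg g A = Sg g' A"
  unfolding Sg_def
proof (rule sum.cong[OF refl])
  fix p assume "p \<in> permutations_of_set A"
  then have "map g p = map g' p" using assms by (auto simp: permutations_of_set_def)
  then show "qhalf (K (map g p)) = qhalf (K (map g' p))" by (rule arg_cong)
qed

lemma perms_image:
  assumes "inj_on h A"
  shows "permutations_of_set (h ` A) = map h ` permutations_of_set A"
proof
  show "map h ` permutations_of_set A \<subseteq> permutations_of_set (h ` A)"
    using assms by (auto simp: permutations_of_set_def distinct_map)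
  show "permutations_of_set (h ` A) \<subseteq> map h ` permutations_of_set A"
  proof
    fix q assume q: "q \<in> permutations_of_set (h ` A)"
    define p where "p = map (inv_into A h) q"
    have "map h p = q" using q by (auto simp: p_def permutations_of_set_def f_inv_into_f intro!: map_idI)
    moreover have "set p = A" using q assms by (auto simp: p_def permutations_of_set_def)
    moreover have "distinct p" using q assms
      by (auto simp: p_def permutations_of_set_def distinct_map intro: inj_on_inv_into)
    ultimately show "q \<in> map h ` permutations_of_set A"
      by (auto simp: permutations_of_set_def)
  qed
qed

lemma Sg_reindex:
  assumes "inj_on h A"
  shows "Sg g (h ` A) = Sg (g \<circ> h) A"
proof -
  have "inj_on (map h) (permutations_of_set A)"
    using assms by (auto simp: inj_on_def permutations_of_set_def intro: map_inj_on)
  then show ?thesis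
    unfolding Sg_def perms_image[OF assms] by (simp add: sum.reindex)
qed

lemma merge_Sg:
  assumes ij: "i < j" "j < length a"
  shows "Sg (nth (merge_pair a i j)) {0..<length a - 1}
       = Sg (\<lambda>k. if k = length a then a!i + a!j else a!k) ({0..<length a} - {i,j} \<union> {length a})"
proof -
  define n where "n = length a"
  define g where "g = (\<lambda>k. if k = length a then a!i + a!j else a!k)"
  define fl where "fl = filter (\<lambda>k. k \<noteq> i \<and> k \<noteq> j) [0..<n]"
  have len: "length fl = n - 2"
  proof -
    have "length fl = card ({0..<n} - {i, j})"
      unfolding fl_def by (simp add: length_filter_conv_card, rule arg_cong[where f=card], auto)
    also have "\<dots> = n - 2" using assms by (subst card_Diff_subset) (auto simp: n_def)
    finally show ?thesis .
  qed
  have dfl: "distinct fl" by (simp add: fl_def)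
  have sfl: "set fl = {0..<n} - {i,j}" by (auto simp: fl_def)
  define h where "h m = (if m < n - 2 then fl ! m else n)" for m
  have img: "h ` {0..<n-1} = {0..<n} - {i,j} \<union> {n}"
  proof
    show "h ` {0..<n-1} \<subseteq> {0..<n} - {i,j} \<union> {n}"
    proof
      fix x assume "x \<in> h ` {0..<n-1}"
      then obtain m where m: "m < n - 1" "x = h m" by auto
      show "x \<in> {0..<n} - {i,j} \<union> {n}"
      proof (cases "m < n - 2")
        case True
        then have "x \<in> set fl" using m len by (simp add: h_def)
        then show ?thesis using sfl by blast
      next
        case False
        then show ?thesis using m by (simp add: h_def)
      qed
    qed
    show "{0..<n} - {i,j} \<union> {n} \<subseteq> h ` {0..<n-1}"
    proof
      fix x assume x: "x \<in> {0..<n} - {i,j} \<union> {n}"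
      show "x \<in> h ` {0..<n-1}"
      proof (cases "x = n")
        case True
        then have "x = h (n-2)" by (simp add: h_def)
        moreover have "n - 2 \<in> {0..<n-1}" using ij by (auto simp: n_def)
        ultimately show ?thesis by blast
      next
        case False
        then have "x \<in> set fl" using x sfl by auto
        then obtain m where "m < length fl" "x = fl ! m" by (auto simp: in_set_conv_nth)
        then have "x = h m" "m \<in> {0..<n-1}" using len by (auto simp: h_def)
        then show ?thesis by blast
      qed
    qed
  qed
  have nin: "n \<notin> set fl" using sfl by auto
  have inj: "inj_on h {0..<n-1}"
  proof (rule inj_onI)
    fix x y assume xy: "x \<in> {0..<n-1}" "y \<in> {0..<n-1}" "h x = h y"
    show "x = y"
    proof (cases "x < n - 2"; cases "y < n - 2")
      assume "x < n - 2" "y < n - 2"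
      then show ?thesis using xy dfl len by (simp add: h_def nth_eq_iff_index_eq)
    next
      assume "x < n - 2" "\<not> y < n - 2"
      then have "h x \<in> set fl" "h y = n" using len by (simp_all add: h_def)
      then show ?thesis using xy nin by simp
    next
      assume "\<not> x < n - 2" "y < n - 2"
      then have "h y \<in> set fl" "h x = n" using len by (simp_all add: h_def)
      then show ?thesis using xy nin by simp
    next
      assume "\<not> x < n - 2" "\<not> y < n - 2"
      then show ?thesis using xy by auto
    qed
  qed
  have mp: "merge_pair a i j ! m = (g \<circ> h) m" if "m \<in> {0..<n-1}" for m
  proof -
    have mpd: "merge_pair a i j = map (nth a) fl @ [a!i + a!j]"
      by (simp add: merge_pair_def fl_def n_def)
    show ?thesis
    proof (cases "m < n - 2")
      case True
      then have "fl ! m \<noteq> n" using nin len by (metis nth_mem)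
      then show ?thesis using True len by (simp add: mpd nth_append h_def g_def n_def)
    next
      case False
      then have "m = n - 2" using that by auto
      then show ?thesis using len by (simp add: mpd nth_append h_def g_def n_def)
    qed
  qed
  have "Sg g ({0..<n} - {i,j} \<union> {n}) = Sg (g \<circ> h) {0..<n-1}"
    by (simp only: img[symmetric] Sg_reindex[OF inj])
  also have "\<dots> = Sg (nth (merge_pair a i j)) {0..<n-1}"
    by (rule Sg_cong) (simp add: mp)
  finally show ?thesis by (simp add: g_def n_def)
qed

lemma decomp2:
  assumes "Suc t < length q"
  shows "\<exists>xs x y ys. q = xs @ x # y # ys \<and> length xs = t"
proof -
  have "q = take t q @ q ! t # q ! Suc t # drop (Suc (Suc t)) q"
    using assms by (simp add: Cons_nth_drop_Suc)
  then show ?thesis using assms by (metis length_take min.absorb4 Suc_lessD)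
qed

definition ex :: "nat \<Rightarrow> nat list \<Rightarrow> nat \<Rightarrow> nat \<Rightarrow> nat list" where
  "ex n p u v = takeWhile (\<lambda>k. k \<noteq> n) p @ u # v # tl (dropWhile (\<lambda>k. k \<noteq> n) p)"

lemma ex_simp:
  assumes "n \<notin> set xs"
  shows "ex n (xs @ n # ys) u v = xs @ u # v # ys"
  using assms by (induction xs) (auto simp: ex_def)

lemma takeWhile_len:
  assumes "n \<notin> set xs"
  shows "length (takeWhile (\<lambda>k. k \<noteq> n) (xs @ n # ys)) = length xs"
  using assms by (induction xs) auto

lemma ex_K:
  assumes p: "p \<in> permutations_of_set ({0..<length a} - {i,j} \<union> {length a})"
    and uv: "a!u + a!v = a!i + a!j"
  shows "K (map (nth a) (ex (length a) p u v))
       = K (map (\<lambda>k. if k = length a then a!i + a!j else a!k) p) + wedge (a!u) (a!v)"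
proof -
  let ?n = "length a"
  have "?n \<in> set p" using p by (auto simp: permutations_of_set_def)
  then obtain xs ys where xy: "p = xs @ ?n # ys" "?n \<notin> set xs" by (metis split_list_first)
  have "?n \<notin> set ys" using p xy by (auto simp: permutations_of_set_def)
  then have m: "map (\<lambda>k. if k = length a then a!i + a!j else a!k) (xs @ ?n # ys)
      = map (nth a) xs @ (a!i + a!j) # map (nth a) ys"
    using xy by auto
  show ?thesis
    unfolding m xy(1) ex_simp[OF xy(2)] using K_split[of "map (nth a) xs" "a!u" "a!v" "map (nth a) ys"]
    by (simp add: uv)
qed

lemma core:
  assumes len: "length a = n"
  shows "(\<Sum>(i,j)\<in>{(i,j). i<j \<and> j<n}.
            Sg (\<lambda>k. if k = n then a!i + a!j else a!k) ({0..<n} - {i,j} \<union> {n}) * bracket_plus (a!i) (a!j))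
         = of_nat (n - 1) * Sg (nth a) {0..<n}"
proof -
  define PB where "PB i j = permutations_of_set ({0..<n} - {i,j} \<union> {n})" for i j
  define G where "G q = qhalf (K (map (nth a) q))" for q
  define F where "F x = G (ex n (snd x)
      (if snd (fst x) then fst (fst (fst x)) else snd (fst (fst x)))
      (if snd (fst x) then snd (fst (fst x)) else fst (fst (fst x))))"
    for x :: "((nat \<times> nat) \<times> bool) \<times> nat list"
  define I where "I = {(i,j). i<j \<and> j<n}"
  define UU where "UU x = (if snd (fst x) then fst (fst (fst x)) else snd (fst (fst x)))"
    for x :: "((nat \<times> nat) \<times> bool) \<times> nat list"
  define VV where "VV x = (if snd (fst x) then snd (fst (fst x)) else fst (fst (fst x)))"
    for x :: "((nat \<times> nat) \<times> bool) \<times> nat list"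
  define jf where "jf y = (ex n (snd y) (UU y) (VV y), length (takeWhile (\<lambda>k. k \<noteq> n) (snd y)))"
    for y :: "((nat \<times> nat) \<times> bool) \<times> nat list"
  define iv where "iv z = (((min (fst z ! snd z) (fst z ! Suc (snd z)), max (fst z ! snd z) (fst z ! Suc (snd z))),
       fst z ! snd z < fst z ! Suc (snd z)), take (snd z) (fst z) @ n # drop (Suc (Suc (snd z))) (fst z))"
    for z :: "nat list \<times> nat"
  define P where "P = permutations_of_set {0..<n}"
  define H where "H x s = (\<Sum>p\<in>PB (fst x) (snd x). F ((x,s),p))" for x s
  have finI: "finite I"
    by (rule finite_subset[of _ "{..<n} \<times> {..<n}"]) (auto simp: I_def)
  have step1: "Sg (\<lambda>k. if k = n then a!i + a!j else a!k) ({0..<n} - {i,j} \<union> {n}) * bracket_plus (a!i) (a!j)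
      = (\<Sum>s\<in>UNIV. \<Sum>p\<in>PB i j. F (((i,j),s),p))" if ij: "(i,j) \<in> I" for i j
  proof -
    have "Sg (\<lambda>k. if k = n then a!i + a!j else a!k) ({0..<n} - {i,j} \<union> {n}) * bracket_plus (a!i) (a!j)
       = (\<Sum>p\<in>PB i j. F (((i,j),True),p) + F (((i,j),False),p))"
      unfolding Sg_def sum_distrib_right
    proof (rule sum.cong)
      show "permutations_of_set ({0..<n} - {i, j} \<union> {n}) = PB i j" by (simp add: PB_def)
      fix p assume p: "p \<in> PB i j"
      have e1: "K (map (nth a) (ex n p i j)) = K (map (\<lambda>k. if k = n then a!i + a!j else a!k) p) + wedge (a!i) (a!j)"
        using ex_K[of p a i j i j] p len by (simp add: PB_def)
      have e2: "K (map (nth a) (ex n p j i)) = K (map (\<lambda>k. if k = n then a!i + a!j else a!k) p) + wedge (a!j) (a!i)"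
        using ex_K[of p a i j j i] p len by (simp add: PB_def add.commute)
      show "qhalf (K (map (\<lambda>k. if k = n then a!i + a!j else a!k) p)) * bracket_plus (a!i) (a!j)
          = F (((i,j),True),p) + F (((i,j),False),p)"
        by (simp add: F_def G_def e1 e2 bracket_mult mult.commute)
    qed
    also have "\<dots> = (\<Sum>s\<in>UNIV. \<Sum>p\<in>PB i j. F (((i,j),s),p))"
      by (simp add: UNIV_bool sum.distrib add.commute)
    finally show ?thesis .
  qed
  have "(\<Sum>(i,j)\<in>I.
            Sg (\<lambda>k. if k = n then a!i + a!j else a!k) ({0..<n} - {i,j} \<union> {n}) * bracket_plus (a!i) (a!j))
      = (\<Sum>(i,j)\<in>I. \<Sum>s\<in>UNIV. \<Sum>p\<in>PB i j. F (((i,j),s),p))"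
  proof (rule sum.cong[OF refl])
    fix x assume "x \<in> I"
    then obtain i j where "x = (i,j)" "(i,j) \<in> I" by (cases x) auto
    then show "(case x of (i, j) \<Rightarrow> Sg (\<lambda>k. if k = n then a!i + a!j else a!k) ({0..<n} - {i,j} \<union> {n}) * bracket_plus (a!i) (a!j))
       = (case x of (i, j) \<Rightarrow> \<Sum>s\<in>UNIV. \<Sum>p\<in>PB i j. F (((i,j),s),p))"
      using step1 by simp
  qed
  also have "\<dots> = (\<Sum>x\<in>I. \<Sum>s\<in>UNIV. H x s)"
    by (simp add: split_def H_def)
  also have "\<dots> = (\<Sum>(x,s)\<in>I \<times> UNIV. H x s)"
    by (rule sum.cartesian_product)
  also have "\<dots> = (\<Sum>y\<in>I \<times> UNIV. H (fst y) (snd y))"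
    by (simp only: split_def)
  also have "\<dots> = (\<Sum>x\<in>I \<times> UNIV. \<Sum>p\<in>PB (fst (fst x)) (snd (fst x)). F (x,p))"
    by (simp add: H_def)
  also have "\<dots> = (\<Sum>y\<in>Sigma (I \<times> UNIV) (\<lambda>x. PB (fst (fst x)) (snd (fst x))). F y)"
    by (subst sum.Sigma) (auto simp: finI PB_def split_def)
  also have "\<dots> = (\<Sum>z\<in>P \<times> {..<n-1}. G (fst z))"
  proof (rule sum.reindex_bij_witness[where j = jf and i = iv])
    let ?S = "Sigma (I \<times> UNIV) (\<lambda>x. PB (fst (fst x)) (snd (fst x)))"
    let ?T = "P \<times> {..<n-1}"
    have Sdec: "\<exists>i j s xs ys. y = (((i,j),s), xs @ n # ys) \<and> i < j \<and> j < n \<and> n \<notin> set xs \<and> n \<notin> set ys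
       \<and> distinct xs \<and> distinct ys \<and> set xs \<inter> set ys = {} \<and> set xs \<union> set ys = {0..<n} - {i,j}"
      if yS: "y \<in> ?S" for y
    proof -
      obtain i j s p where y: "y = (((i,j),s),p)" "i < j" "j < n" "p \<in> PB i j"
        using yS by (auto simp: I_def)
      have "n \<in> set p" using y by (auto simp: PB_def permutations_of_set_def)
      then obtain xs ys where p: "p = xs @ n # ys" by (metis split_list)
      have "distinct p" "set p = {0..<n} - {i,j} \<union> {n}" using y by (auto simp: PB_def permutations_of_set_def)
      then have "n \<notin> set xs \<and> n \<notin> set ys
       \<and> distinct xs \<and> distinct ys \<and> set xs \<inter> set ys = {} \<and> set xs \<union> set ys = {0..<n} - {i,j}"
        unfolding p by auto
      then show ?thesis using y p by blast
    qed
    have Tdec: "\<exists>xs x y ys. z = (xs @ x # y # ys, length xs) \<and> distinct (xs @ x # y # ys)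
       \<and> set (xs @ x # y # ys) = {0..<n}" if zT: "z \<in> ?T" for z
    proof -
      obtain q t where z: "z = (q,t)" "q \<in> P" "t < n - 1" using zT by auto
      have "length q = n" using z by (auto simp: P_def permutations_of_set_def distinct_card[symmetric])
      then have "Suc t < length q" using z by simp
      then obtain xs x y ys where "q = xs @ x # y # ys" "length xs = t" using decomp2[of t q] by blast
      then show ?thesis using z by (auto simp: P_def permutations_of_set_def)
    qed
    show "iv (jf y) = y" if yS: "y \<in> ?S" for y
    proof -
      obtain i j s xs ys where d: "y = (((i,j),s), xs @ n # ys)" "i < j" "j < n" "n \<notin> set xs" "n \<notin> set ys"
       "distinct xs" "distinct ys" "set xs \<inter> set ys = {}" "set xs \<union> set ys = {0..<n} - {i,j}"
        using Sdec[OF yS] by blast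
      show ?thesis using d
        by (cases s) (auto simp: jf_def iv_def UU_def VV_def ex_simp takeWhile_len nth_append)
    qed
    show "jf y \<in> ?T" if yS: "y \<in> ?S" for y
    proof -
      obtain i j s xs ys where d: "y = (((i,j),s), xs @ n # ys)" "i < j" "j < n" "n \<notin> set xs" "n \<notin> set ys"
       "distinct xs" "distinct ys" "set xs \<inter> set ys = {}" "set xs \<union> set ys = {0..<n} - {i,j}"
        using Sdec[OF yS] by blast
      have i1: "i \<notin> set xs" "i \<notin> set ys" "j \<notin> set xs" "j \<notin> set ys" using d by auto
      define u where "u = (if s then i else j)"
      define v where "v = (if s then j else i)"
      have uv: "{u,v} = {i,j}" "u \<noteq> v" "u \<notin> set xs" "u \<notin> set ys" "v \<notin> set xs" "v \<notin> set ys"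
        using d i1 by (auto simp: u_def v_def)
      have jfy: "jf y = (xs @ u # v # ys, length xs)"
        using d by (simp add: jf_def UU_def VV_def u_def v_def ex_simp takeWhile_len)
      have ds: "distinct (xs @ u # v # ys)" using d uv by auto
      have st: "set (xs @ u # v # ys) = {0..<n}"
      proof -
        have "set (xs @ u # v # ys) = (set xs \<union> set ys) \<union> {u,v}" by auto
        also have "\<dots> = {0..<n}" using d uv by auto
        finally show ?thesis .
      qed
      have "length (xs @ u # v # ys) = n" using ds st by (metis card_atLeastLessThan diff_zero distinct_card)
      then show ?thesis using jfy ds st by (auto simp: P_def permutations_of_set_def)
    qed
    show "jf (iv z) = z" if zT: "z \<in> ?T" for z
    proof -
      obtain xs x y ys where d: "z = (xs @ x # y # ys, length xs)" "distinct (xs @ x # y # ys)"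
        "set (xs @ x # y # ys) = {0..<n}"
        using Tdec[OF zT] by blast
      have "n \<notin> set xs" using d by auto
      moreover have "x \<noteq> y" using d by auto
      ultimately show ?thesis using d
        by (auto simp: jf_def iv_def UU_def VV_def ex_simp takeWhile_len nth_append)
    qed
    show "iv z \<in> ?S" if zT: "z \<in> ?T" for z
    proof -
      obtain xs x y ys where d: "z = (xs @ x # y # ys, length xs)" "distinct (xs @ x # y # ys)"
        "set (xs @ x # y # ys) = {0..<n}"
        using Tdec[OF zT] by blast
      have ivz: "iv z = (((min x y, max x y), x < y), xs @ n # ys)"
        using d by (simp add: iv_def nth_append)
      have xy: "x \<noteq> y" "x < n" "y < n" using d by auto
      have "n \<notin> set xs" "n \<notin> set ys" using d by auto
      then have "xs @ n # ys \<in> PB (min x y) (max x y)"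
        using d xy by (auto simp: PB_def permutations_of_set_def min_def max_def)
      moreover have "(min x y, max x y) \<in> I" using xy by (auto simp: I_def min_def max_def)
      ultimately show ?thesis using ivz by auto
    qed
    show "G (fst (jf y)) = F y" if "y \<in> ?S" for y
      by (simp add: jf_def F_def UU_def VV_def)
  qed
  also have "\<dots> = of_nat (n - 1) * Sg (nth a) {0..<n}"
  proof -
    have "(\<Sum>z\<in>P \<times> {..<n-1}. G (fst z)) = (\<Sum>q\<in>P. \<Sum>t\<in>{..<n-1}. G q)"
      using sum.cartesian_product[of "\<lambda>q t. G q" "{..<n-1}" P] by (simp add: split_def)
    also have "\<dots> = (\<Sum>q\<in>P. of_nat (n - 1) * G q)" by simp
    also have "\<dots> = of_nat (n - 1) * Sg (nth a) {0..<n}"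
      by (simp add: Sg_def P_def G_def sum_distrib_left)
    finally show ?thesis .
  qed
  finally show ?thesis by (simp add: I_def)
qed

lemma wedge_sum2: "wedge v (sum f A) = (\<Sum>x\<in>A. wedge v (f x))"
  by (simp add: wedge_def fst_sum snd_sum sum_distrib_left sum_subtractf)

lemma wedge_sum_list2: "wedge v (sum_list vs) = (\<Sum>j<length vs. wedge v (vs!j))"
  by (simp add: sum_list_sum_nth wedge_sum2 atLeast0LessThan)

lemma PS_K: "(\<Sum>i<length vs. \<Sum>j=Suc i..<length vs. wedge (vs!i) (vs!j)) = K vs"
proof (induction vs)
  case Nil
  then show ?case by simp
next
  case (Cons v vs)
  have "(\<Sum>i<length (v#vs). \<Sum>j=Suc i..<length (v#vs). wedge ((v#vs)!i) ((v#vs)!j))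
     = (\<Sum>j=Suc 0..<Suc (length vs). wedge v ((v#vs)!j))
       + (\<Sum>i<length vs. \<Sum>j=Suc (Suc i)..<Suc (length vs). wedge (vs!i) ((v#vs)!j))"
    by (simp only: length_Cons sum.lessThan_Suc_shift nth_Cons_0 nth_Cons_Suc)
  also have "\<dots> = (\<Sum>j=0..<length vs. wedge v (vs!j))
       + (\<Sum>i<length vs. \<Sum>j=Suc i..<length vs. wedge (vs!i) (vs!j))"
    by (simp only: sum.shift_bounds_Suc_ivl o_def nth_Cons_Suc)
  also have "\<dots> = K (v # vs)"
    using Cons by (simp add: wedge_sum_list2 atLeast0LessThan)
  finally show ?case .
qed

lemma kord_K:
  assumes "length p = length a" "sum_list (map (nth a) p) = 0"
  shows "k_ord a p = K (map (nth a) p)"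
proof (cases p)
  case Nil
  then show ?thesis using assms by (simp add: k_ord_def)
next
  case (Cons x ps)
  define v where "v = a ! x"
  define ws where "ws = map (nth a) ps"
  define m where "m = length ps"
  have la: "length a = Suc m" using assms Cons by (simp add: m_def)
  have seq: "{(i, j). 1 \<le> i \<and> i < j \<and> j < length a} = Sigma {1..<Suc m} (\<lambda>i. {Suc i..<Suc m})"
    using la by auto
  have "k_ord a p = (\<Sum>(i,j)\<in>Sigma {1..<Suc m} (\<lambda>i. {Suc i..<Suc m}). wedge (a ! (p ! i)) (a ! (p ! j)))"
    unfolding k_ord_def seq by (rule refl)
  also have "\<dots> = (\<Sum>i\<in>{1..<Suc m}. \<Sum>j=Suc i..<Suc m. wedge (a ! (p ! i)) (a ! (p ! j)))"
    by (rule sum.Sigma[symmetric]) auto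
  also have "\<dots> = (\<Sum>i\<in>{Suc 0..<Suc m}. \<Sum>j=Suc i..<Suc m. wedge ((v#ws) ! i) ((v#ws) ! j))"
    by (intro sum.cong refl) (auto simp: Cons ws_def v_def m_def)
  also have "\<dots> = (\<Sum>i\<in>{0..<m}. \<Sum>j=Suc i..<m. wedge (ws ! i) (ws ! j))"
    by (simp only: sum.shift_bounds_Suc_ivl o_def nth_Cons_Suc)
  also have "\<dots> = K ws" using PS_K[of ws] by (simp add: ws_def m_def atLeast0LessThan)
  also have "\<dots> = K (map (nth a) p)"
  proof -
    have "v + sum_list ws = 0" using assms by (simp add: Cons v_def ws_def)
    then have "sum_list ws = - v" by (simp add: eq_neg_iff_add_eq_0 add.commute)
    then show ?thesis by (simp add: Cons v_def ws_def wedge_neg2 wedge_self)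
  qed
  finally show ?thesis .
qed

lemma sum_list_rotate1': "sum_list (rotate1 xs) = sum_list (xs::vec2 list)"
  by (cases xs) (simp_all add: add.commute)

lemma sum_list_rotate': "sum_list (rotate r xs) = sum_list (xs::vec2 list)"
  by (induction r) (simp_all add: sum_list_rotate1')

lemma K_rotate1:
  assumes "sum_list vs = 0"
  shows "K (rotate1 vs) = K vs"
proof (cases vs)
  case Nil
  then show ?thesis by simp
next
  case (Cons v ws)
  then have "sum_list ws = - v" using assms by (simp add: eq_neg_iff_add_eq_0 add.commute)
  then show ?thesis using Cons
    by (simp add: K_append wedge_neg2 wedge_self wedge_zero2 wedge_anti[of "- v" v])
qed

lemma K_rotate:
  assumes "sum_list vs = 0"
  shows "K (rotate r vs) = K vs"
  by (induction r) (simp_all add: K_rotate1 sum_list_rotate' assms)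

lemma sum_map_perm:
  fixes a :: "vec2 list"
  assumes "p \<in> orderings (length a)"
  shows "sum_list (map (nth a) p) = sum_list a"
proof -
  have "sum_list (map (nth a) p) = sum (nth a) (set p)"
    using assms by (simp add: orderings_def sum_list_distinct_conv_sum_set)
  also have "\<dots> = sum_list a" using assms by (simp add: orderings_def sum_list_sum_nth)
  finally show ?thesis .
qed

lemma rot_orbit_sub: "rot_orbit (rotate r p) \<subseteq> rot_orbit p"
proof
  fix q assume "q \<in> rot_orbit (rotate r p)"
  then obtain s where s: "s < length p" "q = rotate s (rotate r p)" by (auto simp: rot_orbit_def)
  then have "q = rotate ((s + r) mod length p) p"
    by (simp add: rotate_rotate rotate_conv_mod[of "s + r" p])
  moreover have "(s + r) mod length p < length p"
  proof -
    have "0 < length p" using s(1) by (cases p) auto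
    then show ?thesis by simp
  qed
  ultimately show "q \<in> rot_orbit p" by (auto simp: rot_orbit_def)
qed

lemma rot_orbit_rotate: "rot_orbit (rotate r p) = rot_orbit p"
proof (cases "p = []")
  case True
  then show ?thesis by simp
next
  case False
  define L where "L = length p"
  have L: "L > 0" using False by (simp add: L_def)
  have "(L - r mod L + r) mod L = 0"
  proof -
    have "r mod L < L" using L by simp
    then have "L - r mod L + r = L + r div L * L" using div_mult_mod_eq[of r L] by linarith
    then show ?thesis by simp
  qed
  then have "rotate (L - r mod L) (rotate r p) = p"
    unfolding rotate_rotate by (subst rotate_conv_mod) (simp add: L_def)
  then have "rot_orbit p \<subseteq> rot_orbit (rotate r p)"
    using rot_orbit_sub[of "L - r mod L" "rotate r p"] by simp
  then show ?thesis using rot_orbit_sub by blast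
qed

lemma card_rot_orbit:
  assumes "distinct p"
  shows "card (rot_orbit p) = length p"
proof -
  have e: "rot_orbit p = (\<lambda>r. rotate r p) ` {..<length p}" by (auto simp: rot_orbit_def)
  have "inj_on (\<lambda>r. rotate r p) {..<length p}"
  proof (rule inj_onI)
    fix r r' assume rr: "r \<in> {..<length p}" "r' \<in> {..<length p}" "rotate r p = rotate r' p"
    have l: "0 < length p" using rr by auto
    have "p ! r = rotate r p ! 0" using rr(1) l by (simp add: nth_rotate)
    also have "\<dots> = rotate r' p ! 0" using rr by simp
    also have "\<dots> = p ! r'" using rr(2) l by (simp add: nth_rotate)
    finally have "p ! r = p ! r'" .
    then show "r = r'" using rr assms by (simp add: nth_eq_iff_index_eq)
  qed
  then show ?thesis using e by (simp add: card_image)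
qed

lemma orderings_perms: "orderings n = permutations_of_set {0..<n}"
  unfolding orderings_def permutations_of_set_def by (rule Collect_cong) (rule conj_commute)

lemma rot_orbit_orderings: "p \<in> orderings n \<Longrightarrow> q \<in> rot_orbit p \<Longrightarrow> q \<in> orderings n"
  unfolding rot_orbit_def orderings_def by (clarsimp simp only: mem_Collect_eq set_rotate distinct_rotate) simp

lemma self_in_rot_orbit: "p \<noteq> [] \<Longrightarrow> p \<in> rot_orbit p"
  unfolding rot_orbit_def by (rule CollectI, rule exI[of _ 0]) simp

lemma mu_Sg:
  fixes a :: "vec2 list"
  assumes sz: "sum_list a = 0" and n: "length a = n" "n \<ge> 1"
  shows "of_nat n * mu a = Sg (nth a) {0..<n}"
proof -
  define G where "G q = qhalf (K (map (nth a) q))" for q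
  define C where "C = cyclic_perms n"
  have finO: "finite (orderings n)" by (simp add: orderings_perms)
  have finC: "finite C" using finO by (simp add: C_def cyclic_perms_def)
  have Cdec: "\<exists>p. p \<in> orderings n \<and> w = rot_orbit p" if "w \<in> C" for w
    using that by (auto simp: C_def cyclic_perms_def)
  have len: "length p = n" if pO: "p \<in> orderings n" for p
  proof -
    have "distinct p" "set p = {0..<n}" using pO by (auto simp: orderings_def)
    then show ?thesis using distinct_card[of p] by simp
  qed
  have finw: "finite w" if wC: "w \<in> C" for w
  proof -
    obtain p where "w = rot_orbit p" using Cdec[OF wC] by blast
    then have "w = (\<lambda>r. rotate r p) ` {..<length p}" by (auto simp: rot_orbit_def)
    then show ?thesis by simp
  qed
  have union: "\<Union>C = orderings n"
  proof
    show "\<Union>C \<subseteq> orderings n"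
    proof
      fix q assume "q \<in> \<Union>C"
      then obtain w where w: "w \<in> C" "q \<in> w" by blast
      obtain p where "p \<in> orderings n" "w = rot_orbit p" using Cdec[OF w(1)] by blast
      then show "q \<in> orderings n" using w(2) rot_orbit_orderings by blast
    qed
    show "orderings n \<subseteq> \<Union>C"
    proof
      fix p assume p: "p \<in> orderings n"
      then have "p \<noteq> []" using len[OF p] n by auto
      then have "p \<in> rot_orbit p" by (rule self_in_rot_orbit)
      moreover have "rot_orbit p \<in> C" using p by (simp add: C_def cyclic_perms_def)
      ultimately show "p \<in> \<Union>C" by blast
    qed
  qed
  have disj: "\<forall>A\<in>C. \<forall>B\<in>C. A \<noteq> B \<longrightarrow> A \<inter> B = {}"
  proof (intro ballI impI)
    fix A B assume AB: "A \<in> C" "B \<in> C" "A \<noteq> B"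
    obtain p where p: "A = rot_orbit p" using Cdec AB by blast
    obtain p' where p': "B = rot_orbit p'" using Cdec AB by blast
    show "A \<inter> B = {}"
    proof (rule ccontr)
      assume "A \<inter> B \<noteq> {}"
      then obtain q where q: "q \<in> rot_orbit p" "q \<in> rot_orbit p'" using p p' by blast
      obtain r where "q = rotate r p" using q(1) unfolding rot_orbit_def by blast
      moreover obtain r' where "q = rotate r' p'" using q(2) unfolding rot_orbit_def by blast
      ultimately have "rot_orbit p = rot_orbit p'"
        using rot_orbit_rotate[of r p] rot_orbit_rotate[of r' p'] by simp
      then show False using AB p p' by simp
    qed
  qed
  have inner: "(\<Sum>q\<in>w. G q) = of_nat n * qhalf (k_ord a (SOME p. p \<in> w))" if w: "w \<in> C" for w
  proof -
    obtain p where p: "p \<in> orderings n" "w = rot_orbit p" using Cdec[OF w] by blast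
    have pne: "p \<noteq> []" using len[OF p(1)] n by auto
    have const: "G q = G p" if qw: "q \<in> w" for q
    proof -
      obtain r where "q = rotate r p" using qw p by (auto simp: rot_orbit_def)
      moreover have "sum_list (map (nth a) p) = 0" using sum_map_perm[of p a] p n sz by simp
      ultimately show ?thesis by (simp add: G_def rotate_map[symmetric] K_rotate)
    qed
    have "p \<in> w" using self_in_rot_orbit[OF pne] p by simp
    then have sin: "(SOME p. p \<in> w) \<in> w" by (rule someI)
    have sw: "(SOME p. p \<in> w) \<in> orderings n" "G (SOME p. p \<in> w) = G p"
      using rot_orbit_orderings[OF p(1)] p(2) sin const[OF sin] by auto
    have "qhalf (k_ord a (SOME p. p \<in> w)) = G (SOME p. p \<in> w)"
      unfolding G_def
    proof (rule arg_cong[where f=qhalf], rule kord_K)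
      show "length (SOME p. p \<in> w) = length a" using len[OF sw(1)] n by simp
      show "sum_list (map (nth a) (SOME p. p \<in> w)) = 0"
        using sum_map_perm[of "SOME p. p \<in> w" a] sw(1) n sz by simp
    qed
    moreover have "(\<Sum>q\<in>w. G q) = of_nat (card w) * G p"
    proof -
      have "(\<Sum>q\<in>w. G q) = (\<Sum>q\<in>w. G p)" by (rule sum.cong[OF refl const])
      then show ?thesis by simp
    qed
    moreover have "card w = n"
    proof -
      have "distinct p" using p(1) by (simp add: orderings_def)
      then show ?thesis using p(2) card_rot_orbit[of p] len[OF p(1)] by simp
    qed
    ultimately show ?thesis using sw by simp
  qed
  have "Sg (nth a) {0..<n} = (\<Sum>q\<in>\<Union>C. G q)"
    by (simp add: Sg_def G_def union orderings_perms)
  also have "\<dots> = (\<Sum>w\<in>C. \<Sum>q\<in>w. G q)"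
    using sum.Union_disjoint[of C G] finw disj by simp
  also have "\<dots> = (\<Sum>w\<in>C. of_nat n * qhalf (k_ord a (SOME p. p \<in> w)))"
    by (rule sum.cong) (simp_all add: inner)
  also have "\<dots> = of_nat n * mu a"
    by (simp add: mu_def C_def n sum_distrib_left)
  finally show ?thesis by simp
qed

lemma len_merge:
  assumes "i < j" "j < length a"
  shows "length (merge_pair a i j) = length a - 1"
proof -
  have "length (filter (\<lambda>k. k \<noteq> i \<and> k \<noteq> j) [0..<length a]) = card ({0..<length a} - {i, j})"
    by (simp add: length_filter_conv_card, rule arg_cong[where f=card], auto)
  also have "\<dots> = length a - 2" using assms by (subst card_Diff_subset) auto
  finally show ?thesis using assms by (simp add: merge_pair_def)
qed

lemma sum_merge:
  fixes a :: "vec2 list"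
  assumes "i < j" "j < length a"
  shows "sum_list (merge_pair a i j) = sum_list a"
proof -
  define fl where "fl = filter (\<lambda>k. k \<noteq> i \<and> k \<noteq> j) [0..<length a]"
  have "sum_list (map (nth a) fl) = sum (nth a) ({0..<length a} - {i,j})"
    by (simp add: fl_def sum_list_distinct_conv_sum_set) (rule sum.cong, auto)
  moreover have "sum_list a = sum (nth a) ({0..<length a} - {i,j}) + sum (nth a) {i,j}"
    unfolding sum_list_sum_nth using assms by (intro sum.subset_diff) auto
  moreover have "sum (nth a) {i,j} = a!i + a!j" using assms by simp
  ultimately show ?thesis by (simp add: merge_pair_def fl_def add.assoc)
qed

lemma e3: "{0..<3::nat} = {0,1,2}" by auto
lemma perms3: "permutations_of_set {0..<3::nat} = {[0,1,2],[0,2,1],[1,0,2],[1,2,0],[2,0,1],[2,1,0]}"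
proof
  show "{[0,1,2],[0,2,1],[1,0,2],[1,2,0],[2,0,1],[2,1,0]} \<subseteq> permutations_of_set {0..<3::nat}"
    unfolding e3 by (simp add: permutations_of_set_def insert_commute)
  show "permutations_of_set {0..<3::nat} \<subseteq> {[0,1,2],[0,2,1],[1,0,2],[1,2,0],[2,0,1],[2,1,0]}"
  proof
    fix p assume p: "p \<in> permutations_of_set {0..<3::nat}"
    then have "length p = 3" using distinct_card[of p] by (simp add: permutations_of_set_def)
    then obtain u v w where uvw: "p = [u,v,w]"
      by (metis (no_types, lifting) length_0_conv length_Suc_conv numeral_3_eq_3)
    have "set [u,v,w] = {0,1,2}" "distinct [u,v,w]" using p uvw e3 by (simp_all add: permutations_of_set_def)
    then have "u \<in> {0,1,2}" "v \<in> {0,1,2}" "w \<in> {0,1,2}" "u \<noteq> v" "u \<noteq> w" "v \<noteq> w"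
      by (simp_all only: set_simps insert_iff distinct.simps) blast+
    then show "p \<in> {[0,1,2],[0,2,1],[1,0,2],[1,2,0],[2,0,1],[2,1,0]}"
      unfolding uvw by (elim insertE emptyE) simp_all
  qed
qed

lemma Sg3:
  assumes "length a = 3" "sum_list a = 0"
  shows "Sg (nth a) {0..<3} = of_nat 3 * bracket_plus (a!0) (a!1)"
proof -
  obtain x y z where a: "a = [x,y,z]"
    using assms(1) by (metis (no_types, lifting) length_0_conv length_Suc_conv numeral_3_eq_3)
  have "z + (x + y) = 0" using assms(2) a by (simp add: algebra_simps)
  then have z: "z = - (x + y)" by (rule eq_neg_iff_add_eq_0[THEN iffD2])
  define w where "w = wedge x y"
  have k1: "K [x,y,z] = w" "K [x,z,y] = - w" "K [y,x,z] = - w" "K [y,z,x] = w" "K [z,x,y] = w" "K [z,y,x] = - w"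
    unfolding z w_def by (simp_all add: wedge_def algebra_simps)
  have "Sg (nth a) {0..<3} = qhalf w + qhalf (- w) + qhalf (- w) + qhalf w + qhalf w + qhalf (- w)"
    by (simp add: Sg_def perms3 a k1 del: K.simps)
  also have "\<dots> = of_nat 3 * bracket_plus (a!0) (a!1)"
    by (simp add: bracket_plus_def a w_def algebra_simps)
  finally show ?thesis .
qed

lemma theta_Sg:
  "length a \<ge> 3 \<Longrightarrow> sum_list a = 0 \<Longrightarrow>
   theta a = fls_const (of_nat (fact (length a - 1)) / 6) * Sg (nth a) {0..<length a}"
proof (induction a rule: measure_induct_rule[of length])
  case (less a)
  define n where "n = length a"
  show ?case
  proof (cases "n = 3")
    case True
    have "theta a = bracket_plus (a!0) (a!1)"
      using True by (simp add: theta.simps n_def theta3_def)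
    moreover have "Sg (nth a) {0..<n} = of_nat 3 * bracket_plus (a!0) (a!1)"
      using Sg3[of a] True less.prems by (simp add: n_def)
    moreover have "fls_const (of_nat (fact (n - 1)) / 6) * (of_nat 3 :: lpoly) = 1"
    proof -
      have "fls_const (of_nat (fact (n - 1)) / 6) * (of_nat 3 :: lpoly) = fls_const (of_nat (fact (n - 1)) / 6 * of_nat 3)"
        by (simp only: fls_of_nat fls_const_mult_const)
      also have "of_nat (fact (n - 1)) / 6 * of_nat 3 = (1::rat)"
        using True by (simp add: numeral_2_eq_2)
      finally show ?thesis by simp
    qed
    ultimately show ?thesis
      by (simp add: n_def[symmetric] mult.assoc[symmetric])
  next
    case False
    then have n4: "n > 3" using less.prems by (simp add: n_def)
    define I where "I = {(i,j). i < j \<and> j < n}"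
    define c where "c = fls_const (of_nat (fact (n - 2)) / 6 :: rat)"
    have "theta a = (\<Sum>(i, j) \<in> I. theta (merge_pair a i j) * theta3 (a ! i) (a ! j) (- (a ! i + a ! j)))"
      using n4 by (subst theta.simps) (simp add: n_def I_def)
    also have "\<dots> = (\<Sum>(i,j)\<in>I. c * (Sg (\<lambda>k. if k = n then a!i + a!j else a!k) ({0..<n} - {i,j} \<union> {n})
                       * bracket_plus (a!i) (a!j)))"
    proof (rule sum.cong[OF refl])
      fix x assume "x \<in> I"
      then obtain i j where x: "x = (i,j)" "i < j" "j < n" by (auto simp: I_def)
      have lm: "length (merge_pair a i j) = n - 1" using len_merge[of i j a] x by (simp add: n_def)
      have "theta (merge_pair a i j)
          = fls_const (of_nat (fact (length (merge_pair a i j) - 1)) / 6) * Sg (nth (merge_pair a i j)) {0..<length (merge_pair a i j)}"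
        using less.IH[of "merge_pair a i j"] lm n4 sum_merge[of i j a] x less.prems
        by (simp add: n_def)
      also have "\<dots> = c * Sg (\<lambda>k. if k = n then a!i + a!j else a!k) ({0..<n} - {i,j} \<union> {n})"
        using lm merge_Sg[of i j a] x n4 by (simp add: c_def n_def numeral_2_eq_2)
      finally show "(case x of (i, j) \<Rightarrow> theta (merge_pair a i j) * theta3 (a ! i) (a ! j) (- (a ! i + a ! j)))
         = (case x of (i,j) \<Rightarrow> c * (Sg (\<lambda>k. if k = n then a!i + a!j else a!k) ({0..<n} - {i,j} \<union> {n})
                       * bracket_plus (a!i) (a!j)))"
        using x by (simp add: theta3_def mult.assoc)
    qed
    also have "\<dots> = c * (\<Sum>(i,j)\<in>I. Sg (\<lambda>k. if k = n then a!i + a!j else a!k) ({0..<n} - {i,j} \<union> {n})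
                       * bracket_plus (a!i) (a!j))"
      by (simp add: sum_distrib_left split_def)
    also have "\<dots> = c * (of_nat (n - 1) * Sg (nth a) {0..<n})"
      using core[of a n] by (simp add: I_def n_def)
    also have "\<dots> = fls_const (of_nat (fact (n - 1)) / 6) * Sg (nth a) {0..<n}"
    proof -
      obtain m where m: "n = Suc (Suc m)" using n4 by (cases n; cases "n - 1") auto
      have "fact (n - 1) = (n - 1) * fact (n - 2)" by (simp add: m)
      then have "c * of_nat (n - 1) = fls_const (of_nat (fact (n - 1)) / 6)"
        by (simp add: c_def fls_of_nat mult.commute)
      then show ?thesis by (simp add: mult.assoc[symmetric])
    qed
    finally show ?thesis by (simp add: n_def)
  qed
qed

theorem proposition1p3:
  fixes a :: "vec2 list"
  assumes "length a \<ge> 3"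
    and "sum_list a = 0"
  shows "theta a = fls_const (of_nat (fact (length a)) / of_nat (fact 3)) * mu a"
proof -
  define n where "n = length a"
  have "theta a = fls_const (of_nat (fact (n - 1)) / 6) * Sg (nth a) {0..<n}"
    using theta_Sg assms by (simp add: n_def)
  also have "\<dots> = fls_const (of_nat (fact (n - 1)) / 6) * (of_nat n * mu a)"
    using mu_Sg[of a n] assms by (simp add: n_def)
  also have "\<dots> = fls_const (of_nat (fact n) / of_nat (fact 3)) * mu a"
  proof -
    obtain m where m: "n = Suc m" using assms by (cases n) (auto simp: n_def)
    have "fact n = n * fact (n - 1)" by (simp add: m)
    then have "fls_const (of_nat (fact (n - 1)) / 6) * (of_nat n :: lpoly) = fls_const (of_nat (fact n) / of_nat (fact 3))"
      by (simp add: fls_of_nat fact_numeral mult.commute)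
    then show ?thesis by (simp add: mult.assoc[symmetric])
  qed
  finally show ?thesis by (simp add: n_def)
qed

end
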